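(* Let $\omega>0$, $v(x)=\omega^2x^2/2$ on $\mathbb{Z}$, $\gamma\in(-\infty,-1)$, and $H_N=\frac{N^2}{2}\Delta+N^{-2\gamma}v$ on $\ell^2(\mathbb{Z})$. Then $$\lim_{N\to\infty}\frac{E_0(H_N)}{N^{2|\gamma|}}=0,\qquad \lim_{N\to\infty}\frac{E_{2n}(H_N)}{N^{2|\gamma|}}=\lim_{N\to\infty}\frac{E_{2n-1}(H_N)}{N^{2|\gamma|}}=\frac{\omega^2n^2}{2}\quad(n\ge1).$$
   Context: $(\Delta f)(x)=2f(x)-f(x+1)-f(x-1)$; $v$ acts by multiplication. $E_n(H_N)$ is the $n$-th eigenvalue of $H_N$ counted with multiplicity, $n=0,1,2,\dots$. *)

theory Defs
  imports "HOL-Analysis.Analysis"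
begin

definition l2 :: "(int \<Rightarrow> real) \<Rightarrow> bool" where
  "l2 f \<longleftrightarrow> (\<lambda>x. (f x)\<^sup>2) summable_on UNIV"

definition lap :: "(int \<Rightarrow> real) \<Rightarrow> int \<Rightarrow> real" where
  "lap f x = 2 * f x - f (x + 1) - f (x - 1)"

definition harm_pot :: "real \<Rightarrow> int \<Rightarrow> real" where
  "harm_pot \<omega> x = \<omega>\<^sup>2 * (real_of_int x)\<^sup>2 / 2"

definition H_op :: "(int \<Rightarrow> real) \<Rightarrow> real \<Rightarrow> nat \<Rightarrow> (int \<Rightarrow> real) \<Rightarrow> int \<Rightarrow> real" where
  "H_op v \<gamma> N f x = (real N)\<^sup>2 / 2 * lap f x + real N powr (-2 * \<gamma>) * v x * f x"

definition eigenspace :: "((int \<Rightarrow> real) \<Rightarrow> int \<Rightarrow> real) \<Rightarrow> real \<Rightarrow> (int \<Rightarrow> real) set" where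
  "eigenspace H lam = {f. l2 f \<and> H f = (\<lambda>x. lam * f x)}"

definition is_eigenvalue :: "((int \<Rightarrow> real) \<Rightarrow> int \<Rightarrow> real) \<Rightarrow> real \<Rightarrow> bool" where
  "is_eigenvalue H lam \<longleftrightarrow> (\<exists>f\<in>eigenspace H lam. f \<noteq> (\<lambda>_. 0))"

definition lin_indep :: "(int \<Rightarrow> real) set \<Rightarrow> bool" where
  "lin_indep S \<longleftrightarrow> (\<forall>c. (\<lambda>x. \<Sum>f\<in>S. c f * f x) = (\<lambda>_. 0) \<longrightarrow> (\<forall>f\<in>S. c f = 0))"

definition multiplicity_eig :: "((int \<Rightarrow> real) \<Rightarrow> int \<Rightarrow> real) \<Rightarrow> real \<Rightarrow> nat" where
  "multiplicity_eig H lam =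
     Sup {card S | S. finite S \<and> S \<subseteq> eigenspace H lam \<and> lin_indep S}"

definition eig_count :: "((int \<Rightarrow> real) \<Rightarrow> int \<Rightarrow> real) \<Rightarrow> real \<Rightarrow> nat" where
  "eig_count H t = (\<Sum>\<mu>\<in>{\<mu>. is_eigenvalue H \<mu> \<and> \<mu> \<le> t}. multiplicity_eig H \<mu>)"

text \<open>E_n(H): n-th eigenvalue (n = 0,1,2,...) counted with multiplicity.\<close>
definition E :: "((int \<Rightarrow> real) \<Rightarrow> int \<Rightarrow> real) \<Rightarrow> nat \<Rightarrow> real" where
  "E H n = Inf {t. n < eig_count H t}"

end

theory Submission
  imports Defs
begin

definition Op :: "real \<Rightarrow> real \<Rightarrow> real \<Rightarrow> (int \<Rightarrow> real) \<Rightarrow> int \<Rightarrow> real" where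
  "Op \<omega> a b f x = a * lap f x + b * harm_pot \<omega> x * f x"

lemma H_eq: "H_op (harm_pot \<omega>) \<gamma> N = Op \<omega> ((real N)\<^sup>2 / 2) (real N powr (-2 * \<gamma>))"
  by (auto simp: H_op_def Op_def fun_eq_iff)

lemma l2_level_finite:
  assumes "l2 f" "\<delta> > 0"
  shows "finite {x. \<delta> \<le> \<bar>f x\<bar>}"
proof (rule ccontr)
  assume inf: "infinite {x. \<delta> \<le> \<bar>f x\<bar>}"
  define I where "I = infsum (\<lambda>x. (f x)\<^sup>2) UNIV"
  obtain n :: nat where n: "I / \<delta>\<^sup>2 < n" using reals_Archimedean2 by blast
  obtain F where F: "finite F" "F \<subseteq> {x. \<delta> \<le> \<bar>f x\<bar>}" "card F = n"
    using infinite_arbitrarily_large[OF inf] by blast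
  have "sum (\<lambda>x. (f x)\<^sup>2) F \<le> I"
    unfolding I_def
    by (rule finite_sum_le_infsum) (use assms(1) F in \<open>auto simp: l2_def\<close>)
  moreover have "sum (\<lambda>x. (f x)\<^sup>2) F \<ge> sum (\<lambda>x. \<delta>\<^sup>2) F"
  proof (rule sum_mono)
    fix x assume "x \<in> F"
    then have "\<delta> \<le> \<bar>f x\<bar>" using F by auto
    then show "\<delta>\<^sup>2 \<le> (f x)\<^sup>2" using assms(2)
      by (metis abs_ge_zero abs_of_pos power2_abs power_mono)
  qed
  moreover have "sum (\<lambda>x. \<delta>\<^sup>2) F = n * \<delta>\<^sup>2" using F by simp
  moreover have "I < n * \<delta>\<^sup>2" using n assms(2) by (simp add: field_simps)
  ultimately show False by linarith
qed

lemma finite_int_bounded: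
  assumes "finite (A :: int set)"
  shows "\<exists>m. \<forall>x\<in>A. \<bar>x\<bar> < m"
proof -
  have fin: "finite (insert 0 (abs ` A))" using assms by simp
  define m where "m = Max (insert 0 (abs ` A))"
  have "\<forall>x\<in>A. \<bar>x\<bar> \<le> m" unfolding m_def using Max_ge[OF fin] by blast
  then show ?thesis by (intro exI[of _ "m+1"]) auto
qed

lemma l2_small:
  assumes "l2 f" "\<delta> > 0"
  shows "\<exists>m. \<forall>x. m \<le> \<bar>x\<bar> \<longrightarrow> \<bar>f x\<bar> < \<delta>"
proof -
  obtain m where m: "\<forall>x\<in>{x. \<delta> \<le> \<bar>f x\<bar>}. \<bar>x\<bar> < m"
    using finite_int_bounded[OF l2_level_finite[OF assms]] by blast
  show ?thesis
  proof (intro exI allI impI)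
    fix x assume "m \<le> \<bar>x\<bar>"
    then show "\<bar>f x\<bar> < \<delta>" using m by (meson mem_Collect_eq not_le)
  qed
qed

lemma l2_max:
  assumes "l2 f" "f x1 \<noteq> 0"
  shows "\<exists>x0. \<forall>x. \<bar>f x\<bar> \<le> \<bar>f x0\<bar>"
proof -
  define A where "A = {x. \<bar>f x1\<bar> \<le> \<bar>f x\<bar>}"
  have fin: "finite A" unfolding A_def using l2_level_finite[OF assms(1)] assms(2) by auto
  have ne: "x1 \<in> A" unfolding A_def by auto
  have fin2: "finite ((\<lambda>y. \<bar>f y\<bar>) ` A)" "(\<lambda>y. \<bar>f y\<bar>) ` A \<noteq> {}" using fin ne by auto
  obtain x0 where x0A: "x0 \<in> A" and x0M: "\<bar>f x0\<bar> = Max ((\<lambda>y. \<bar>f y\<bar>) ` A)"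
    using Max_in[OF fin2] by auto
  have x0: "x0 \<in> A" "\<forall>y\<in>A. \<bar>f y\<bar> \<le> \<bar>f x0\<bar>"
    using x0A x0M Max_ge[OF fin2(1)] by auto
  show ?thesis
  proof (intro exI allI)
    fix x show "\<bar>f x\<bar> \<le> \<bar>f x0\<bar>"
      using x0 unfolding A_def by (cases "x \<in> A") (auto simp: A_def)
  qed
qed

lemma l2_reflect:
  assumes "l2 f"
  shows "l2 (\<lambda>x. f (- x))"
proof -
  have "(\<lambda>x. (f x)\<^sup>2) summable_on (uminus ` UNIV)" using assms by (simp add: l2_def)
  then have "((\<lambda>x. (f x)\<^sup>2) \<circ> uminus) summable_on UNIV"
    by (subst (asm) summable_on_reindex) auto
  then show ?thesis by (simp add: l2_def o_def)
qed


lemma zero_prop: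
  fixes h :: "int \<Rightarrow> real"
  assumes a: "a \<noteq> 0" and eq: "\<And>x. a * lap h x + w x * h x = \<mu> * h x"
    and z: "h x0 = 0" "h (x0 + 1) = 0"
  shows "h = (\<lambda>_. 0)"
proof -
  have fw: "h (x + 1) = 0" if "h x = 0" "h (x - 1) = 0" for x
  proof -
    have "a * h (x+1) = 0" using eq[of x] that by (simp add: lap_def algebra_simps)
    then show ?thesis using a by simp
  qed
  have bw: "h (x - 1) = 0" if "h x = 0" "h (x + 1) = 0" for x
  proof -
    have "a * h (x-1) = 0" using eq[of x] that by (simp add: lap_def algebra_simps)
    then show ?thesis using a by simp
  qed
  have "h x = 0 \<and> h (x + 1) = 0" for x
  proof (induction x rule: int_induct[where k = x0])
    case base then show ?case using z by simp
  next
    case (step1 i) then show ?case using fw[of "i+1"] by simp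
  next
    case (step2 i) then show ?case using bw[of i] by simp
  qed
  then show ?thesis by auto
qed

lemma simple_eig:
  fixes f g :: "int \<Rightarrow> real"
  assumes a: "a \<noteq> 0"
    and ef: "\<And>x. a * lap f x + w x * f x = \<mu> * f x"
    and eg: "\<And>x. a * lap g x + w x * g x = \<mu> * g x"
    and lf: "l2 f" and lg: "l2 g" and nz: "f x0 \<noteq> 0"
  shows "g = (\<lambda>x. (g x0 / f x0) * f x)"
proof -
  define W where "W x = f x * g (x + 1) - f (x + 1) * g x" for x
  have step: "W x = W (x - 1)" for x
  proof -
    have "a * (W x - W (x - 1)) = g x * (a * lap f x + w x * f x - \<mu> * f x) - f x * (a * lap g x + w x * g x - \<mu> * g x)"
      by (simp add: W_def lap_def algebra_simps)
    also have "\<dots> = 0" using ef[of x] eg[of x] by simp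
    finally show ?thesis using a by simp
  qed
  have const: "W x = W 0" for x
  proof (induction x rule: int_induct[where k = 0])
    case base then show ?case by simp
  next
    case (step1 i) then show ?case using step[of "i+1"] by simp
  next
    case (step2 i) then show ?case using step[of i] by simp
  qed
  have W0: "W 0 = 0"
  proof (rule ccontr)
    assume ne: "W 0 \<noteq> 0"
    define \<delta> where "\<delta> = sqrt (\<bar>W 0\<bar> / 4)"
    have dpos: "\<delta> > 0" using ne by (simp add: \<delta>_def)
    have d2: "\<delta> * \<delta> = \<bar>W 0\<bar> / 4" unfolding \<delta>_def by (simp add: real_sqrt_mult_self)
    obtain m1 where m1: "\<forall>x. m1 \<le> \<bar>x\<bar> \<longrightarrow> \<bar>f x\<bar> < \<delta>" using l2_small[OF lf dpos] by blast
    obtain m2 where m2: "\<forall>x. m2 \<le> \<bar>x\<bar> \<longrightarrow> \<bar>g x\<bar> < \<delta>" using l2_small[OF lg dpos] by blast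
    define x where "x = \<bar>m1\<bar> + \<bar>m2\<bar>"
    have b1: "\<bar>f x\<bar> < \<delta>" "\<bar>f (x+1)\<bar> < \<delta>" "\<bar>g x\<bar> < \<delta>" "\<bar>g (x+1)\<bar> < \<delta>"
      using m1 m2 by (auto simp: x_def)
    have "\<bar>W x\<bar> \<le> \<bar>f x * g (x+1)\<bar> + \<bar>f (x+1) * g x\<bar>"
      unfolding W_def by (rule abs_triangle_ineq4)
    also have "\<dots> = \<bar>f x\<bar> * \<bar>g (x+1)\<bar> + \<bar>f (x+1)\<bar> * \<bar>g x\<bar>" by (simp add: abs_mult)
    also have "\<dots> \<le> \<delta> * \<delta> + \<delta> * \<delta>"
      using b1 by (intro add_mono mult_mono) auto
    finally have "\<bar>W x\<bar> \<le> \<bar>W 0\<bar> / 2" using d2 by simp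
    then show False using const[of x] ne by simp
  qed
  define c where "c = g x0 / f x0"
  define h where "h x = g x - c * f x" for x
  have eh: "a * lap h x + w x * h x = \<mu> * h x" for x
  proof -
    have "a * lap h x + w x * h x - \<mu> * h x = (a * lap g x + w x * g x - \<mu> * g x) - c * (a * lap f x + w x * f x - \<mu> * f x)"
      by (simp add: h_def lap_def algebra_simps)
    then show ?thesis using ef[of x] eg[of x] by simp
  qed
  have h0: "h x0 = 0" using nz by (simp add: h_def c_def)
  have "f x0 * h (x0 + 1) = W x0 + f (x0 + 1) * h x0"
    by (simp add: W_def h_def algebra_simps)
  also have "\<dots> = 0" using const[of x0] W0 h0 by simp
  finally have h1: "h (x0 + 1) = 0" using nz by simp
  have "h = (\<lambda>_. 0)" by (rule zero_prop[OF a eh h0 h1])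
  then have "g x - c * f x = 0" for x by (metis h_def)
  then show ?thesis unfolding c_def[symmetric] by (simp add: fun_eq_iff)
qed


lemma lap_reflect: "lap (\<lambda>x. f (- x)) x = lap f (- x)"
proof -
  have e1: "f (-(x+1)) = f (-x - 1)" by (rule arg_cong[of _ _ f]) simp
  have e2: "f (-(x-1)) = f (-x + 1)" by (rule arg_cong[of _ _ f]) simp
  show ?thesis unfolding lap_def e1 e2 by simp
qed

lemma harm_pot_neg: "harm_pot \<omega> (- x) = harm_pot \<omega> x"
  by (simp add: harm_pot_def)

lemma Op_reflect: "Op \<omega> a b (\<lambda>x. f (- x)) x = Op \<omega> a b f (- x)"
  by (simp add: Op_def lap_reflect harm_pot_neg)

lemma lap_sym:
  assumes "\<And>x. f (- x) = \<sigma> * f x"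
  shows "lap f (- x) = \<sigma> * lap f x"
proof -
  have h0: "f (- x) = \<sigma> * f x" by (rule assms)
  have "- x + 1 = - (x - 1)" by simp
  then have h1: "f (- x + 1) = \<sigma> * f (x - 1)" using assms[of "x - 1"] by simp
  have "- x - 1 = - (x + 1)" by simp
  then have h2: "f (- x - 1) = \<sigma> * f (x + 1)" using assms[of "x + 1"] by simp
  show ?thesis unfolding lap_def h0 h1 h2 by (simp add: algebra_simps)
qed

lemma Op_sym:
  assumes "\<And>x. f (- x) = \<sigma> * f x"
  shows "Op \<omega> a b f (- x) = \<sigma> * Op \<omega> a b f x"
proof -
  have "lap f (- x) = \<sigma> * lap f x" by (rule lap_sym) (rule assms)
  then show ?thesis using assms[of x] by (simp add: Op_def algebra_simps harm_pot_neg)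
qed

lemma lap_bound:
  assumes "\<And>y. \<bar>f y\<bar> \<le> M"
  shows "\<bar>lap f x\<bar> \<le> 4 * M"
proof -
  have "\<bar>lap f x\<bar> \<le> 2 * \<bar>f x\<bar> + \<bar>f (x+1)\<bar> + \<bar>f (x-1)\<bar>"
    unfolding lap_def by linarith
  also have "\<dots> \<le> 4 * M" using assms[of x] assms[of "x+1"] assms[of "x-1"] by linarith
  finally show ?thesis .
qed

lemma lap_diff_bound:
  assumes "\<And>y. \<bar>f y - g y\<bar> \<le> d"
  shows "\<bar>lap f x - lap g x\<bar> \<le> 4 * d"
proof -
  have "lap f x - lap g x = lap (\<lambda>y. f y - g y) x" by (simp add: lap_def algebra_simps)
  then show ?thesis using lap_bound[of "\<lambda>y. f y - g y" d x] assms by simp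
qed

lemma window:
  assumes "a \<ge> 0" "\<And>x. \<bar>f x\<bar> \<le> \<bar>f x0\<bar>" "f x0 \<noteq> 0" "Op \<omega> a b f x0 = \<mu> * f x0"
  shows "\<bar>\<mu> - b * harm_pot \<omega> x0\<bar> \<le> 4 * a"
proof -
  have "(\<mu> - b * harm_pot \<omega> x0) * f x0 = a * lap f x0" using assms(4) by (simp add: Op_def algebra_simps)
  then have "\<bar>(\<mu> - b * harm_pot \<omega> x0) * f x0\<bar> = \<bar>a * lap f x0\<bar>" by (simp only:)
  then have "\<bar>\<mu> - b * harm_pot \<omega> x0\<bar> * \<bar>f x0\<bar> = a * \<bar>lap f x0\<bar>" using assms(1) by (simp add: abs_mult)
  also have "\<dots> \<le> a * (4 * \<bar>f x0\<bar>)" using lap_bound[of f "\<bar>f x0\<bar>" x0] assms(1,2) by (simp add: mult_left_mono)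
  finally show ?thesis using assms(3) by simp
qed

lemma int_abs_ge1: "(y::int) \<noteq> 0 \<Longrightarrow> 1 \<le> \<bar>y\<bar>" by arith

lemma gap:
  assumes "x \<noteq> int k" "x \<noteq> - int k" "\<omega> > 0"
  shows "\<omega>\<^sup>2 / 2 \<le> \<bar>harm_pot \<omega> x - harm_pot \<omega> (int k)\<bar>"
proof -
  have "x^2 \<noteq> (int k)^2" using assms(1,2) by (simp add: power2_eq_iff)
  then have "x^2 - (int k)^2 \<noteq> 0" by simp
  then have "1 \<le> \<bar>x^2 - (int k)^2\<bar>" using int_abs_ge1 by blast
  then have "real_of_int 1 \<le> real_of_int \<bar>x^2 - (int k)^2\<bar>" by (simp only: of_int_le_iff)
  then have "1 \<le> \<bar>(real_of_int x)^2 - (real k)^2\<bar>" by simp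
  then have "\<omega>\<^sup>2 * 1 \<le> \<omega>\<^sup>2 * \<bar>(real_of_int x)^2 - (real k)^2\<bar>" by (intro mult_left_mono) auto
  moreover have e: "harm_pot \<omega> x - harm_pot \<omega> (int k) = \<omega>\<^sup>2 * ((real_of_int x)^2 - (real k)^2) / 2"
    by (simp add: harm_pot_def algebra_simps)
  then have "\<bar>harm_pot \<omega> x - harm_pot \<omega> (int k)\<bar> = \<omega>\<^sup>2 * \<bar>(real_of_int x)^2 - (real k)^2\<bar> / 2"
    unfolding e by (simp add: abs_mult)
  ultimately show ?thesis by simp
qed

lemma gap_mono:
  assumes "k < k'" "\<omega> > 0"
  shows "harm_pot \<omega> (int k) + \<omega>\<^sup>2 / 2 \<le> harm_pot \<omega> (int k')"
proof -
  have "(real k)^2 + 1 \<le> (real k')^2"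
  proof -
    have "real k + 1 \<le> real k'" using assms(1) by simp
    then have "(real k + 1)^2 \<le> (real k')^2" by (intro power_mono) auto
    then show ?thesis by (simp add: power2_eq_square algebra_simps)
  qed
  then have "\<omega>\<^sup>2 * ((real k)^2 + 1) \<le> \<omega>\<^sup>2 * (real k')^2" by (intro mult_left_mono) auto
  then show ?thesis by (simp add: harm_pot_def algebra_simps)
qed

definition clp :: "real \<Rightarrow> real" where "clp y = max (-1) (min 1 y)"

lemma clamp_lip: "\<bar>clp y - clp z\<bar> \<le> \<bar>y - z\<bar>" by (simp add: clp_def)
lemma clamp_id: "\<bar>y\<bar> \<le> 1 \<Longrightarrow> clp y = y" by (simp add: clp_def)
lemma clamp_bound: "\<bar>clp y\<bar> \<le> 1" by (simp add: clp_def)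
lemma clamp_sym: "\<sigma> = 1 \<or> \<sigma> = -1 \<Longrightarrow> clp (\<sigma> * y) = \<sigma> * clp y" by (auto simp: clp_def)

lemma quot_ineq:
  fixes a d G L1 L2 D1 D2 :: real
  assumes G: "G > 0" "G \<le> \<bar>D1\<bar>" "G \<le> \<bar>D2\<bar>" and L: "\<bar>L1 - L2\<bar> \<le> 4 * d" "\<bar>L2\<bar> \<le> 4"
    and D: "\<bar>D1 - D2\<bar> \<le> 4 * a * d" and a: "a \<ge> 0" "16 * a \<le> G" and d: "d \<ge> 0"
  shows "\<bar>a * L1 / D1 - a * L2 / D2\<bar> \<le> d / 2"
proof -
  have D1: "D1 \<noteq> 0" and D2: "D2 \<noteq> 0" using G by auto
  have eq: "a * L1 / D1 - a * L2 / D2 = a * (L1 - L2) / D1 + a * L2 * (D2 - D1) / (D1 * D2)"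
    using D1 D2 by (simp add: field_simps)
  have t1: "\<bar>a * (L1 - L2) / D1\<bar> \<le> d / 4"
  proof -
    have "\<bar>a * (L1 - L2) / D1\<bar> = a * \<bar>L1 - L2\<bar> / \<bar>D1\<bar>" using a by (simp add: abs_mult)
    also have "\<dots> \<le> a * (4 * d) / G"
      using a G L by (intro frac_le mult_left_mono) auto
    also have "\<dots> \<le> d / 4"
    proof -
      have "16 * a * d \<le> G * d" using a d by (intro mult_right_mono) auto
      then show ?thesis using G by (simp add: field_simps)
    qed
    finally show ?thesis .
  qed
  have t2: "\<bar>a * L2 * (D2 - D1) / (D1 * D2)\<bar> \<le> d / 4"
  proof -
    have "\<bar>a * L2 * (D2 - D1) / (D1 * D2)\<bar> = a * \<bar>L2\<bar> * \<bar>D1 - D2\<bar> / (\<bar>D1\<bar> * \<bar>D2\<bar>)"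
      using a by (simp add: abs_mult abs_minus_commute)
    also have "\<dots> \<le> a * 4 * (4 * a * d) / (G * G)"
      using a G L D d by (intro frac_le mult_mono mult_left_mono) auto
    also have "\<dots> = (4 * a) * (4 * a) * d / (G * G)" by simp
    also have "\<dots> \<le> (G / 4) * (G / 4) * d / (G * G)"
      using a G d by (intro divide_right_mono mult_right_mono mult_mono) auto
    also have "\<dots> = d / 16" using G by (simp add: field_simps)
    finally have "\<bar>a * L2 * (D2 - D1) / (D1 * D2)\<bar> \<le> d / 16" .
    moreover have "d / 16 \<le> d / 4" using d by simp
    ultimately show ?thesis by (rule order_trans)
  qed
  have "\<bar>a * L1 / D1 - a * L2 / D2\<bar> = \<bar>a * (L1 - L2) / D1 + a * L2 * (D2 - D1) / (D1 * D2)\<bar>"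
    by (simp only: eq)
  also have "\<dots> \<le> \<bar>a * (L1 - L2) / D1\<bar> + \<bar>a * L2 * (D2 - D1) / (D1 * D2)\<bar>" by (rule abs_triangle_ineq)
  also have "\<dots> \<le> d / 4 + d / 4" by (rule add_mono[OF t1 t2])
  finally show ?thesis by simp
qed


definition nuf :: "real \<Rightarrow> real \<Rightarrow> real \<Rightarrow> nat \<Rightarrow> (int \<Rightarrow> real) \<Rightarrow> real" where
  "nuf \<omega> a b k f = b * harm_pot \<omega> (int k) + a * lap f (int k)"

definition Tm :: "real \<Rightarrow> real \<Rightarrow> real \<Rightarrow> nat \<Rightarrow> real \<Rightarrow> (int \<Rightarrow> real) \<Rightarrow> int \<Rightarrow> real" where
  "Tm \<omega> a b k \<sigma> f x = (if x = int k then 1 else if x = - int k then \<sigma> else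
      clp (- (a * lap f x) / (b * harm_pot \<omega> x - nuf \<omega> a b k f)))"

definition Fm :: "real \<Rightarrow> real \<Rightarrow> real \<Rightarrow> nat \<Rightarrow> real \<Rightarrow> (int \<Rightarrow>\<^sub>C real) \<Rightarrow> (int \<Rightarrow>\<^sub>C real)" where
  "Fm \<omega> a b k \<sigma> g = Bcontfun (Tm \<omega> a b k \<sigma> (apply_bcontfun g))"

definition Sm :: "nat \<Rightarrow> real \<Rightarrow> (int \<Rightarrow>\<^sub>C real) set" where
  "Sm k \<sigma> = {g. (\<forall>x. \<bar>apply_bcontfun g x\<bar> \<le> 1) \<and> (\<forall>x. apply_bcontfun g (- x) = \<sigma> * apply_bcontfun g x)
      \<and> apply_bcontfun g (int k) = 1}"

definition goodp :: "real \<Rightarrow> real \<Rightarrow> real \<Rightarrow> bool" where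
  "goodp \<omega> a b \<longleftrightarrow> \<omega> > 0 \<and> a > 0 \<and> b > 0 \<and> 64 * a \<le> b * \<omega>\<^sup>2"

definition validp :: "nat \<Rightarrow> real \<Rightarrow> bool" where
  "validp k \<sigma> \<longleftrightarrow> \<sigma> = 1 \<or> (\<sigma> = -1 \<and> k \<ge> 1)"

lemma validp_sq: "validp k \<sigma> \<Longrightarrow> \<sigma> * \<sigma> = 1" by (auto simp: validp_def)
lemma validp_abs: "validp k \<sigma> \<Longrightarrow> \<bar>\<sigma>\<bar> = 1" by (auto simp: validp_def)

lemma clamp_abs: "\<bar>clp y\<bar> \<le> \<bar>y\<bar>" by (simp add: clp_def)

lemma Tm_bound: "validp k \<sigma> \<Longrightarrow> \<bar>Tm \<omega> a b k \<sigma> f x\<bar> \<le> 1"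
  using clamp_bound validp_abs[of k \<sigma>] by (auto simp: Tm_def)

lemma Tm_bcont: "validp k \<sigma> \<Longrightarrow> Tm \<omega> a b k \<sigma> f \<in> bcontfun"
  by (rule bcontfun_normI[where b=1]) (auto simp: Tm_bound)

lemma Fm_apply: "validp k \<sigma> \<Longrightarrow> apply_bcontfun (Fm \<omega> a b k \<sigma> g) = Tm \<omega> a b k \<sigma> (apply_bcontfun g)"
  by (simp add: Fm_def Bcontfun_inverse Tm_bcont)

lemma nuf_window:
  assumes "\<And>y. \<bar>f y\<bar> \<le> 1" "a \<ge> 0"
  shows "\<bar>nuf \<omega> a b k f - b * harm_pot \<omega> (int k)\<bar> \<le> 4 * a"
proof -
  have "\<bar>lap f (int k)\<bar> \<le> 4" using lap_bound[of f 1] assms by simp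
  then have "a * \<bar>lap f (int k)\<bar> \<le> a * 4" using assms(2) by (intro mult_left_mono) auto
  then show ?thesis using assms(2) by (simp add: nuf_def abs_mult)
qed

lemma denom_bound:
  assumes g: "goodp \<omega> a b" and mu: "\<bar>\<mu> - b * harm_pot \<omega> (int k)\<bar> \<le> 4 * a"
    and x: "x \<noteq> int k" "x \<noteq> - int k"
  shows "b * \<omega>\<^sup>2 / 4 \<le> \<bar>b * harm_pot \<omega> x - \<mu>\<bar>"
proof -
  have gg: "\<omega> > 0" "a > 0" "b > 0" "64 * a \<le> b * \<omega>\<^sup>2" using g by (auto simp: goodp_def)
  have "\<omega>\<^sup>2 / 2 \<le> \<bar>harm_pot \<omega> x - harm_pot \<omega> (int k)\<bar>" by (rule gap[OF x gg(1)])
  then have "b * (\<omega>\<^sup>2 / 2) \<le> b * \<bar>harm_pot \<omega> x - harm_pot \<omega> (int k)\<bar>" using gg(3) by (intro mult_left_mono) auto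
  moreover have "b * harm_pot \<omega> x - b * harm_pot \<omega> (int k) = b * (harm_pot \<omega> x - harm_pot \<omega> (int k))"
    by (simp add: algebra_simps)
  ultimately have "b * \<omega>\<^sup>2 / 2 \<le> \<bar>b * harm_pot \<omega> x - b * harm_pot \<omega> (int k)\<bar>" using gg(3) by (simp add: abs_mult)
  then show ?thesis using mu gg(4) by linarith
qed

lemma denom_bound_f:
  assumes g: "goodp \<omega> a b" and f: "\<And>y. \<bar>f y\<bar> \<le> 1" and x: "x \<noteq> int k" "x \<noteq> - int k"
  shows "b * \<omega>\<^sup>2 / 4 \<le> \<bar>b * harm_pot \<omega> x - nuf \<omega> a b k f\<bar>"
  using denom_bound[OF g nuf_window[OF f] x] g by (auto simp: goodp_def)

lemma Tm_sym:
  assumes v: "validp k \<sigma>" and f: "\<And>x. f (- x) = \<sigma> * f x"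
  shows "Tm \<omega> a b k \<sigma> f (- x) = \<sigma> * Tm \<omega> a b k \<sigma> f x"
proof (cases "x = int k")
  case True
  then show ?thesis using v by (cases "k = 0") (auto simp: Tm_def validp_def)
next
  case F1: False
  show ?thesis
  proof (cases "x = - int k")
    case True
    then show ?thesis using F1 validp_sq[OF v] by (auto simp: Tm_def)
  next
    case False
    have s: "\<sigma> = 1 \<or> \<sigma> = -1" using v by (auto simp: validp_def)
    define Y where "Y = - (a * lap f x) / (b * harm_pot \<omega> x - nuf \<omega> a b k f)"
    have arg: "- (a * lap f (- x)) / (b * harm_pot \<omega> (- x) - nuf \<omega> a b k f) = \<sigma> * Y"
      using lap_sym[of f \<sigma> x, OF f] by (simp add: harm_pot_neg Y_def)
    have tx: "Tm \<omega> a b k \<sigma> f x = clp Y" using F1 False by (simp add: Tm_def Y_def)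
    have "Tm \<omega> a b k \<sigma> f (- x) = clp (- (a * lap f (- x)) / (b * harm_pot \<omega> (- x) - nuf \<omega> a b k f))"
      using F1 False by (simp add: Tm_def)
    also have "\<dots> = clp (\<sigma> * Y)" by (simp only: arg)
    also have "\<dots> = \<sigma> * clp Y" by (rule clamp_sym[OF s])
    also have "\<dots> = \<sigma> * Tm \<omega> a b k \<sigma> f x" by (simp only: tx)
    finally show ?thesis .
  qed
qed

lemma cont_eval: "continuous_on UNIV (\<lambda>g::int \<Rightarrow>\<^sub>C real. apply_bcontfun g x)"
  unfolding continuous_on_iff
proof (intro ballI allI impI)
  fix g :: "int \<Rightarrow>\<^sub>C real" and e :: real assume "e > 0"
  then show "\<exists>d>0. \<forall>g'\<in>UNIV. dist g' g < d \<longrightarrow> dist (apply_bcontfun g' x) (apply_bcontfun g x) < e"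
    using dist_bounded[of g' x g for g'] by (intro exI[of _ e]) (auto intro: le_less_trans)
qed

lemma Sm_closed: "closed (Sm k \<sigma>)"
proof -
  have "Sm k \<sigma> = (\<Inter>x. {g. apply_bcontfun g x \<le> 1} \<inter> {g. - 1 \<le> apply_bcontfun g x}
       \<inter> {g. apply_bcontfun g (- x) = \<sigma> * apply_bcontfun g x}) \<inter> {g. apply_bcontfun g (int k) = 1}"
    by (auto simp: Sm_def abs_le_iff)
  moreover have "closed \<dots>"
    by (intro closed_Int closed_INT ballI closed_Collect_le closed_Collect_eq cont_eval continuous_on_const
        continuous_on_mult continuous_on_minus)
  ultimately show ?thesis by simp
qed

lemma Sm_ne:
  assumes v: "validp k \<sigma>"
  shows "Sm k \<sigma> \<noteq> {}"
proof -
  define e0 where "e0 x = (if x = int k then 1 else if x = - int k then \<sigma> else 0)" for x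
  have b: "\<bar>e0 x\<bar> \<le> 1" for x using validp_abs[OF v] by (auto simp: e0_def)
  have "e0 \<in> bcontfun" by (rule bcontfun_normI[where b=1]) (auto simp: b)
  then have ap: "apply_bcontfun (Bcontfun e0) = e0" by (simp add: Bcontfun_inverse)
  have sym: "e0 (- x) = \<sigma> * e0 x" for x
    using v validp_sq[OF v] by (cases "k = 0") (auto simp: e0_def validp_def)
  have "Bcontfun e0 \<in> Sm k \<sigma>" unfolding Sm_def using ap b sym by (auto simp: e0_def)
  then show ?thesis by blast
qed

lemma Fm_maps:
  assumes v: "validp k \<sigma>" and g: "g \<in> Sm k \<sigma>"
  shows "Fm \<omega> a b k \<sigma> g \<in> Sm k \<sigma>"
proof -
  have ap: "apply_bcontfun (Fm \<omega> a b k \<sigma> g) = Tm \<omega> a b k \<sigma> (apply_bcontfun g)" by (rule Fm_apply[OF v])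
  have sym: "\<And>x. apply_bcontfun g (- x) = \<sigma> * apply_bcontfun g x" using g by (auto simp: Sm_def)
  show ?thesis unfolding Sm_def mem_Collect_eq ap
    using Tm_bound[OF v] Tm_sym[where f="apply_bcontfun g", OF v sym] by (auto simp: Tm_def)
qed

lemma Fm_contr:
  assumes gd: "goodp \<omega> a b" and v: "validp k \<sigma>" and g: "g \<in> Sm k \<sigma>" and h: "h \<in> Sm k \<sigma>"
  shows "dist (Fm \<omega> a b k \<sigma> g) (Fm \<omega> a b k \<sigma> h) \<le> 1/2 * dist g h"
proof (rule dist_bound)
  fix x
  have gg: "\<omega> > 0" "a > 0" "b > 0" "64 * a \<le> b * \<omega>\<^sup>2" using gd by (auto simp: goodp_def)
  define d where "d = dist g h"
  have d0: "d \<ge> 0" by (simp add: d_def)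
  have gh: "\<bar>apply_bcontfun g y - apply_bcontfun h y\<bar> \<le> d" for y
    using dist_bounded[of g y h] by (simp add: d_def dist_real_def)
  have gb: "\<bar>apply_bcontfun g y\<bar> \<le> 1" and hb: "\<bar>apply_bcontfun h y\<bar> \<le> 1" for y using g h by (auto simp: Sm_def)
  show "dist (apply_bcontfun (Fm \<omega> a b k \<sigma> g) x) (apply_bcontfun (Fm \<omega> a b k \<sigma> h) x) \<le> 1/2 * dist g h"
  proof (cases "x = int k \<or> x = - int k")
    case True
    then show ?thesis using d0 by (auto simp: Fm_apply[OF v] Tm_def d_def)
  next
    case False
    define L1 where "L1 = lap (apply_bcontfun g) x"
    define L2 where "L2 = lap (apply_bcontfun h) x"
    define D1 where "D1 = b * harm_pot \<omega> x - nuf \<omega> a b k (apply_bcontfun g)"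
    define D2 where "D2 = b * harm_pot \<omega> x - nuf \<omega> a b k (apply_bcontfun h)"
    have G1: "b * \<omega>\<^sup>2 / 4 \<le> \<bar>D1\<bar>" unfolding D1_def using denom_bound_f[OF gd gb] False by auto
    have G2: "b * \<omega>\<^sup>2 / 4 \<le> \<bar>D2\<bar>" unfolding D2_def using denom_bound_f[OF gd hb] False by auto
    have L12: "\<bar>L1 - L2\<bar> \<le> 4 * d" unfolding L1_def L2_def by (rule lap_diff_bound) (rule gh)
    have L2b: "\<bar>L2\<bar> \<le> 4" unfolding L2_def using lap_bound[of "apply_bcontfun h" 1 x] hb by simp
    have "D1 - D2 = a * (lap (apply_bcontfun h) (int k) - lap (apply_bcontfun g) (int k))"
      by (simp add: D1_def D2_def nuf_def algebra_simps)
    then have "\<bar>D1 - D2\<bar> = a * \<bar>lap (apply_bcontfun h) (int k) - lap (apply_bcontfun g) (int k)\<bar>"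
      using gg by (simp add: abs_mult)
    also have "\<dots> \<le> a * (4 * d)" using lap_diff_bound[of "apply_bcontfun h" "apply_bcontfun g" d] gh gg
      by (intro mult_left_mono) (auto simp: abs_minus_commute)
    finally have D12: "\<bar>D1 - D2\<bar> \<le> 4 * a * d" by simp
    have Gpos: "b * \<omega>\<^sup>2 / 4 > 0" using gg by simp
    have q: "\<bar>a * L1 / D1 - a * L2 / D2\<bar> \<le> d / 2"
      by (rule quot_ineq[OF Gpos G1 G2 L12 L2b D12]) (use gg d0 in auto)
    have "dist (apply_bcontfun (Fm \<omega> a b k \<sigma> g) x) (apply_bcontfun (Fm \<omega> a b k \<sigma> h) x)
        = \<bar>clp (- (a * L1) / D1) - clp (- (a * L2) / D2)\<bar>"
      using False by (simp add: Fm_apply[OF v] Tm_def dist_real_def L1_def L2_def D1_def D2_def)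
    also have "\<dots> \<le> \<bar>- (a * L1) / D1 - - (a * L2) / D2\<bar>" by (rule clamp_lip)
    also have "\<dots> = \<bar>a * L1 / D1 - a * L2 / D2\<bar>" by (simp add: abs_minus_commute)
    finally show ?thesis using q by (simp add: d_def)
  qed
qed

lemma complete_bcont_int: "complete (UNIV :: (int \<Rightarrow>\<^sub>C real) set)"
proof (rule completeI)
  fix f :: "nat \<Rightarrow> (int \<Rightarrow>\<^sub>C real)"
  assume "\<forall>n. f n \<in> UNIV" and "Cauchy f"
  then obtain g where "uniform_limit UNIV f g sequentially"
    using uniformly_convergent_eq_cauchy[of "\<lambda>_. True" f]
    unfolding Cauchy_def uniform_limit_sequentially_iff
    by (metis dist_fun_lt_imp_dist_val_lt)
  from uniform_limit_bcontfunE[OF this sequentially_bot]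
  obtain l' where "g = apply_bcontfun l'" "(f \<longlonglongrightarrow> l')" by metis
  then show "\<exists>l\<in>UNIV. f \<longlonglongrightarrow> l" by blast
qed

lemma fix_unique:
  assumes gd: "goodp \<omega> a b" and v: "validp k \<sigma>"
  shows "\<exists>!g. g \<in> Sm k \<sigma> \<and> Fm \<omega> a b k \<sigma> g = g"
proof -
  have "\<exists>!g\<in>Sm k \<sigma>. Fm \<omega> a b k \<sigma> g = g"
  proof (rule Banach_fix[where c="1/2"])
    show "complete (Sm k \<sigma>)"
      by (rule complete_closed_subset[OF Sm_closed subset_UNIV complete_bcont_int])
  qed (use Sm_ne[OF v] Fm_maps[OF v] Fm_contr[OF gd v] in auto)
  then show ?thesis by blast
qed


definition phi :: "real \<Rightarrow> real \<Rightarrow> real \<Rightarrow> nat \<Rightarrow> real \<Rightarrow> int \<Rightarrow> real" where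
  "phi \<omega> a b k \<sigma> = apply_bcontfun (THE g. g \<in> Sm k \<sigma> \<and> Fm \<omega> a b k \<sigma> g = g)"

definition mu :: "real \<Rightarrow> real \<Rightarrow> real \<Rightarrow> nat \<Rightarrow> real \<Rightarrow> real" where
  "mu \<omega> a b k \<sigma> = nuf \<omega> a b k (phi \<omega> a b k \<sigma>)"

lemma phi_props:
  assumes gd: "goodp \<omega> a b" and v: "validp k \<sigma>"
  shows "(\<forall>x. \<bar>phi \<omega> a b k \<sigma> x\<bar> \<le> 1) \<and> (\<forall>x. phi \<omega> a b k \<sigma> (- x) = \<sigma> * phi \<omega> a b k \<sigma> x)
    \<and> phi \<omega> a b k \<sigma> (int k) = 1 \<and> Tm \<omega> a b k \<sigma> (phi \<omega> a b k \<sigma>) = phi \<omega> a b k \<sigma>"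
proof -
  define G where "G = (THE g. g \<in> Sm k \<sigma> \<and> Fm \<omega> a b k \<sigma> g = g)"
  have G: "G \<in> Sm k \<sigma> \<and> Fm \<omega> a b k \<sigma> G = G" unfolding G_def by (rule theI'[OF fix_unique[OF gd v]])
  have p: "phi \<omega> a b k \<sigma> = apply_bcontfun G" by (simp add: phi_def G_def)
  have "Tm \<omega> a b k \<sigma> (apply_bcontfun G) = apply_bcontfun G"
    using G Fm_apply[OF v, of \<omega> a b G] by simp
  then show ?thesis using G unfolding p by (auto simp: Sm_def)
qed

lemma phi_unique:
  assumes gd: "goodp \<omega> a b" and v: "validp k \<sigma>"
    and f: "\<And>x. \<bar>f x\<bar> \<le> 1" "\<And>x. f (- x) = \<sigma> * f x" "f (int k) = 1" "Tm \<omega> a b k \<sigma> f = f"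
  shows "f = phi \<omega> a b k \<sigma>"
proof -
  have fb: "f \<in> bcontfun" by (rule bcontfun_normI[where b=1]) (auto simp: f)
  then have ap: "apply_bcontfun (Bcontfun f) = f" by (simp add: Bcontfun_inverse)
  have S: "Bcontfun f \<in> Sm k \<sigma>" unfolding Sm_def using ap f by auto
  have "Fm \<omega> a b k \<sigma> (Bcontfun f) = Bcontfun f" unfolding Fm_def ap f(4) ..
  then have "(THE g. g \<in> Sm k \<sigma> \<and> Fm \<omega> a b k \<sigma> g = g) = Bcontfun f"
    using S by (intro the1_equality[OF fix_unique[OF gd v]]) auto
  then show ?thesis unfolding phi_def using ap by simp
qed

lemma small_quot:
  assumes gd: "goodp \<omega> a b" and D: "b * \<omega>\<^sup>2 / 4 \<le> \<bar>D\<bar>" and L: "\<bar>L\<bar> \<le> 4"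
  shows "\<bar>- (a * L) / D\<bar> \<le> 1"
proof -
  have gg: "\<omega> > 0" "a > 0" "b > 0" "64 * a \<le> b * \<omega>\<^sup>2" using gd by (auto simp: goodp_def)
  have bp: "b * \<omega>\<^sup>2 / 4 > 0" using gg by simp
  have Dp: "\<bar>D\<bar> > 0" using D bp by linarith
  have "a * \<bar>L\<bar> \<le> a * 4" using L gg by (intro mult_left_mono) auto
  also have "\<dots> \<le> \<bar>D\<bar>" using D gg by linarith
  finally have "\<bar>a * L\<bar> \<le> \<bar>D\<bar>" using gg by (simp add: abs_mult)
  then show ?thesis using Dp by (simp add: abs_divide divide_le_eq_1)
qed

lemma fixed_eigen:
  assumes gd: "goodp \<omega> a b" and v: "validp k \<sigma>"
    and f: "\<And>x. \<bar>f x\<bar> \<le> 1" "\<And>x. f (- x) = \<sigma> * f x" "f (int k) = 1" "Tm \<omega> a b k \<sigma> f = f"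
  shows "Op \<omega> a b f x = nuf \<omega> a b k f * f x"
proof -
  have atk: "Op \<omega> a b f (int k) = nuf \<omega> a b k f * f (int k)"
    using f(3) by (simp add: Op_def nuf_def)
  have off: "Op \<omega> a b f y = nuf \<omega> a b k f * f y" if y: "y \<noteq> int k" "y \<noteq> - int k" for y
  proof -
    define D where "D = b * harm_pot \<omega> y - nuf \<omega> a b k f"
    have Db: "b * \<omega>\<^sup>2 / 4 \<le> \<bar>D\<bar>" unfolding D_def by (rule denom_bound_f[OF gd f(1) y])
    have gg: "\<omega> > 0" "b > 0" using gd by (auto simp: goodp_def)
    have bp: "b * \<omega>\<^sup>2 / 4 > 0" using gg by simp
    have Dn: "D \<noteq> 0" using Db bp by auto
    have Lb: "\<bar>lap f y\<bar> \<le> 4" using lap_bound[of f 1 y] f(1) by simp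
    have "f y = Tm \<omega> a b k \<sigma> f y" using f(4) by simp
    also have "\<dots> = clp (- (a * lap f y) / D)" using y by (simp add: Tm_def D_def)
    also have "\<dots> = - (a * lap f y) / D" by (rule clamp_id[OF small_quot[OF gd Db Lb]])
    finally have "f y * D = - (a * lap f y)" using Dn by simp
    then show ?thesis unfolding D_def by (simp add: Op_def algebra_simps)
  qed
  show ?thesis
  proof (cases "x = int k")
    case True then show ?thesis using atk by simp
  next
    case False
    show ?thesis
    proof (cases "x = - int k")
      case True
      have "Op \<omega> a b f x = \<sigma> * Op \<omega> a b f (int k)" unfolding True by (rule Op_sym) (rule f(2))
      also have "\<dots> = nuf \<omega> a b k f * f x" using atk f(2)[of "int k"] f(3) True by simp
      finally show ?thesis .
    next
      case False
      then show ?thesis using off \<open>x \<noteq> int k\<close> by blast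
    qed
  qed
qed

lemma eigen_fixed:
  assumes gd: "goodp \<omega> a b" and v: "validp k \<sigma>"
    and f: "\<And>x. \<bar>f x\<bar> \<le> 1" "\<And>x. f (- x) = \<sigma> * f x" "f (int k) = 1"
    and e: "\<And>x. Op \<omega> a b f x = \<mu> * f x" and w: "\<bar>\<mu> - b * harm_pot \<omega> (int k)\<bar> \<le> 4 * a"
  shows "nuf \<omega> a b k f = \<mu> \<and> Tm \<omega> a b k \<sigma> f = f"
proof -
  have nu: "nuf \<omega> a b k f = \<mu>" using e[of "int k"] f(3) by (simp add: Op_def nuf_def algebra_simps)
  have "Tm \<omega> a b k \<sigma> f y = f y" for y
  proof (cases "y = int k")
    case True then show ?thesis using f(3) by (simp add: Tm_def)
  next
    case F1: False
    show ?thesis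
    proof (cases "y = - int k")
      case True then show ?thesis using F1 f(2)[of "int k"] f(3) by (simp add: Tm_def)
    next
      case False
      define D where "D = b * harm_pot \<omega> y - \<mu>"
      have Db: "b * \<omega>\<^sup>2 / 4 \<le> \<bar>D\<bar>" unfolding D_def by (rule denom_bound[OF gd w F1 False])
      have gg: "\<omega> > 0" "b > 0" using gd by (auto simp: goodp_def)
      have bp: "b * \<omega>\<^sup>2 / 4 > 0" using gg by simp
    have Dn: "D \<noteq> 0" using Db bp by auto
      have "f y * D = - (a * lap f y)" using e[of y] by (simp add: Op_def D_def algebra_simps)
      then have fy: "f y = - (a * lap f y) / D" using Dn by (simp add: field_simps)
      have "Tm \<omega> a b k \<sigma> f y = clp (- (a * lap f y) / D)" using F1 False by (simp add: Tm_def D_def nu)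
      also have "\<dots> = f y" unfolding fy[symmetric] by (rule clamp_id[OF f(1)])
      finally show ?thesis .
    qed
  qed
  then show ?thesis using nu by auto
qed


lemma summable_inv_sq_nat: "(\<lambda>n::nat. 1 / ((real n)^2 + 1)) summable_on UNIV"
proof -
  have s: "summable (\<lambda>n::nat. inverse ((real n)^2))" using inverse_power_summable[of 2] by simp
  have "summable (\<lambda>n::nat. 1 / ((real n)^2 + 1))"
  proof (rule summable_comparison_test[OF _ s])
    show "\<exists>N. \<forall>n\<ge>N. norm (1 / ((real n)^2 + 1)) \<le> inverse ((real n)^2)"
    proof (intro exI[of _ 1] allI impI)
      fix n :: nat assume "1 \<le> n"
      then have p: "(real n)^2 > 0" by simp
      show "norm (1 / ((real n)^2 + 1)) \<le> inverse ((real n)^2)"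
        using p by (simp add: inverse_eq_divide frac_le)
    qed
  qed
  then have "summable (\<lambda>n::nat. norm (1 / ((real n)^2 + 1)))" by simp
  from norm_summable_imp_summable_on[OF this] show ?thesis .
qed

lemma summable_inv_sq_int: "(\<lambda>x::int. 1 / ((real_of_int x)^2 + 1)) summable_on UNIV"
proof -
  define H where "H x = 1 / ((real_of_int x)^2 + 1)" for x :: int
  have "H summable_on (int ` UNIV)"
    by (subst summable_on_reindex) (auto simp: o_def H_def summable_inv_sq_nat inj_on_def)
  moreover have "H summable_on ((\<lambda>n. - int n) ` UNIV)"
    by (subst summable_on_reindex) (auto simp: o_def H_def summable_inv_sq_nat inj_on_def)
  ultimately have "H summable_on (int ` UNIV \<union> (\<lambda>n. - int n) ` UNIV)" by (rule summable_on_union)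
  moreover have "int ` UNIV \<union> (\<lambda>n. - int n) ` UNIV = UNIV"
  proof -
    have "x \<in> int ` UNIV \<union> (\<lambda>n. - int n) ` UNIV" for x :: int
    proof (cases "0 \<le> x")
      case True then have "x = int (nat x)" by simp
      then show ?thesis by blast
    next
      case False then have "x = - int (nat (- x))" by simp
      then show ?thesis by blast
    qed
    then show ?thesis by blast
  qed
  ultimately have "H summable_on UNIV" by simp
  moreover have "H = (\<lambda>x. 1 / ((real_of_int x)^2 + 1))" by (simp add: fun_eq_iff H_def)
  ultimately show ?thesis by simp
qed

lemma fixed_bound:
  assumes gd: "goodp \<omega> a b" and v: "validp k \<sigma>"
    and f: "\<And>x. \<bar>f x\<bar> \<le> 1" "Tm \<omega> a b k \<sigma> f = f"
  shows "(f x)\<^sup>2 \<le> (2 * (real k)^2 + 2) * (1 / ((real_of_int x)^2 + 1))"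
proof -
  have gg: "\<omega> > 0" "a > 0" "b > 0" "64 * a \<le> b * \<omega>\<^sup>2" using gd by (auto simp: goodp_def)
  define X where "X = real_of_int x"
  define K where "K = real k"
  have f2: "(f x)\<^sup>2 \<le> 1"
  proof -
    have "\<bar>f x\<bar> * \<bar>f x\<bar> \<le> 1 * 1" using f(1)[of x] by (intro mult_mono) auto
    then show ?thesis by (simp add: power2_eq_square abs_mult_self_eq)
  qed
  show ?thesis
  proof (cases "x^2 \<le> 2 * (int k)^2")
    case True
    then have "real_of_int (x^2) \<le> real_of_int (2 * (int k)^2)" by (simp only: of_int_le_iff)
    then have "X^2 \<le> 2 * K^2" by (simp add: X_def K_def)
    moreover have pos: "X^2 + 1 > 0" by (simp add: add_nonneg_pos)
    ultimately have "1 \<le> (2 * K^2 + 2) / (X^2 + 1)" by (simp add: pos_le_divide_eq[OF pos])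
    then show ?thesis using f2 by (simp add: X_def K_def)
  next
    case False
    then have "2 * (int k)^2 + 1 \<le> x^2" by simp
    then have "real_of_int (2 * (int k)^2 + 1) \<le> real_of_int (x^2)" by (simp only: of_int_le_iff)
    then have X2: "2 * K^2 + 1 \<le> X^2" by (simp add: X_def K_def)
    have xk: "x \<noteq> int k" "x \<noteq> - int k" using False by auto
    define D where "D = b * harm_pot \<omega> x - nuf \<omega> a b k f"
    have nw: "\<bar>nuf \<omega> a b k f - b * harm_pot \<omega> (int k)\<bar> \<le> 4 * a" by (rule nuf_window[OF f(1)]) (use gg in auto)
    have hv: "b * harm_pot \<omega> x - b * harm_pot \<omega> (int k) = b * \<omega>\<^sup>2 * (X^2 - K^2) / 2"
      by (simp add: harm_pot_def X_def K_def algebra_simps)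
    have "b * \<omega>\<^sup>2 * (X^2 - 2 * K^2) \<ge> b * \<omega>\<^sup>2 * 1" using X2 gg by (intro mult_left_mono) auto
    then have DX: "D \<ge> b * \<omega>\<^sup>2 * X^2 / 4" using hv nw gg unfolding D_def by (simp add: algebra_simps)
    have "0 \<le> K^2" by simp
    then have X1: "X^2 \<ge> 1" using X2 by linarith
    have DX2: "D \<ge> 16 * a * X^2"
    proof -
      have "16 * a * X^2 \<le> (b * \<omega>\<^sup>2 / 4) * X^2" using gg by (intro mult_right_mono) auto
      then show ?thesis using DX by simp
    qed
    have "X^2 > 0" using X1 by linarith
    then have "16 * a * X^2 > 0" using gg by simp
    then have Dp: "D > 0" using DX2 by linarith
    have Lb: "\<bar>lap f x\<bar> \<le> 4" using lap_bound[of f 1 x] f(1) by simp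
    have "f x = Tm \<omega> a b k \<sigma> f x" using f(2) by simp
    also have "\<dots> = clp (- (a * lap f x) / D)" using xk by (simp add: Tm_def D_def)
    finally have "\<bar>f x\<bar> = \<bar>clp (- (a * lap f x) / D)\<bar>" by simp
    also have "\<dots> \<le> \<bar>- (a * lap f x) / D\<bar>" by (rule clamp_abs)
    also have "\<dots> = a * \<bar>lap f x\<bar> / D" using Dp gg by (simp add: abs_divide abs_mult)
    finally have "\<bar>f x\<bar> * D \<le> a * \<bar>lap f x\<bar>" using Dp by (simp add: field_simps)
    also have "\<dots> \<le> a * 4" using Lb gg by (intro mult_left_mono) auto
    finally have fD: "\<bar>f x\<bar> * D \<le> 4 * a" by simp
    have "\<bar>f x\<bar> * (16 * a * X^2) \<le> \<bar>f x\<bar> * D" using DX2 by (intro mult_left_mono) auto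
    then have "\<bar>f x\<bar> * X^2 * (16 * a) \<le> 4 * a" using fD by (simp add: algebra_simps)
    then have fX: "\<bar>f x\<bar> * X^2 \<le> 1 / 4" using gg by (simp add: field_simps)
    have "(f x)\<^sup>2 * (X^2 + 1) \<le> (f x)\<^sup>2 * (2 * X^2)" using X1 by (intro mult_left_mono) auto
    also have "\<dots> = 2 * \<bar>f x\<bar> * (\<bar>f x\<bar> * X^2)" by (simp add: power2_eq_square abs_mult_self_eq)
    also have "\<dots> \<le> 2 * 1 * (1 / 4)" using f(1)[of x] fX by (intro mult_mono) auto
    also have "\<dots> \<le> 2 * K^2 + 2" by (simp add: K_def)
    finally have "(f x)\<^sup>2 * (X^2 + 1) \<le> 2 * K^2 + 2" .
    moreover have "X^2 + 1 > 0" using X1 by linarith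
    ultimately show ?thesis by (simp add: X_def K_def field_simps)
  qed
qed

lemma fixed_l2:
  assumes gd: "goodp \<omega> a b" and v: "validp k \<sigma>"
    and f: "\<And>x. \<bar>f x\<bar> \<le> 1" "Tm \<omega> a b k \<sigma> f = f"
  shows "l2 f"
  unfolding l2_def
  by (rule summable_on_comparison_test[OF summable_on_cmult_right[OF summable_inv_sq_int]])
     (use fixed_bound[OF gd v f] in auto)


lemma phi_eig:
  assumes gd: "goodp \<omega> a b" and v: "validp k \<sigma>"
  shows "phi \<omega> a b k \<sigma> \<in> eigenspace (Op \<omega> a b) (mu \<omega> a b k \<sigma>)" "phi \<omega> a b k \<sigma> (int k) = 1"
proof -
  note P = phi_props[OF gd v]
  have b1: "\<And>x. \<bar>phi \<omega> a b k \<sigma> x\<bar> \<le> 1" and sy: "\<And>x. phi \<omega> a b k \<sigma> (- x) = \<sigma> * phi \<omega> a b k \<sigma> x"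
    and k1: "phi \<omega> a b k \<sigma> (int k) = 1" and T: "Tm \<omega> a b k \<sigma> (phi \<omega> a b k \<sigma>) = phi \<omega> a b k \<sigma>"
    using P by auto
  have "Op \<omega> a b (phi \<omega> a b k \<sigma>) = (\<lambda>x. mu \<omega> a b k \<sigma> * phi \<omega> a b k \<sigma> x)"
    using fixed_eigen[OF gd v b1 sy k1 T] by (auto simp: fun_eq_iff mu_def)
  moreover have "l2 (phi \<omega> a b k \<sigma>)" by (rule fixed_l2[OF gd v b1 T])
  ultimately show "phi \<omega> a b k \<sigma> \<in> eigenspace (Op \<omega> a b) (mu \<omega> a b k \<sigma>)" by (simp add: eigenspace_def)
  show "phi \<omega> a b k \<sigma> (int k) = 1" by (rule k1)
qed

lemma phi_is_eig:
  assumes gd: "goodp \<omega> a b" and v: "validp k \<sigma>"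
  shows "is_eigenvalue (Op \<omega> a b) (mu \<omega> a b k \<sigma>)"
proof -
  have "phi \<omega> a b k \<sigma> \<noteq> (\<lambda>_. 0)"
  proof
    assume "phi \<omega> a b k \<sigma> = (\<lambda>_. 0)"
    then have "phi \<omega> a b k \<sigma> (int k) = 0" by simp
    then show False using phi_eig(2)[OF gd v] by simp
  qed
  then show ?thesis using phi_eig(1)[OF gd v] unfolding is_eigenvalue_def by blast
qed

lemma mu_window:
  assumes gd: "goodp \<omega> a b" and v: "validp k \<sigma>"
  shows "\<bar>mu \<omega> a b k \<sigma> - b * harm_pot \<omega> (int k)\<bar> \<le> 4 * a"
  unfolding mu_def by (rule nuf_window) (use phi_props[OF gd v] gd in \<open>auto simp: goodp_def\<close>)

lemma Op_eq_form: "Op \<omega> a b f x = a * lap f x + (\<lambda>x. b * harm_pot \<omega> x) x * f x"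
  by (simp add: Op_def)

lemma simple_Op:
  assumes a: "a \<noteq> 0" and f: "f \<in> eigenspace (Op \<omega> a b) \<mu>" and g: "g \<in> eigenspace (Op \<omega> a b) \<mu>"
    and nz: "f x0 \<noteq> 0"
  shows "g = (\<lambda>x. (g x0 / f x0) * f x)"
proof -
  have ef: "\<And>x. a * lap f x + b * harm_pot \<omega> x * f x = \<mu> * f x"
    using f by (auto simp: eigenspace_def Op_def fun_eq_iff)
  have eg: "\<And>x. a * lap g x + b * harm_pot \<omega> x * g x = \<mu> * g x"
    using g by (auto simp: eigenspace_def Op_def fun_eq_iff)
  have l: "l2 f" "l2 g" using f g by (auto simp: eigenspace_def)
  show ?thesis by (rule simple_eig[where w="\<lambda>x. b * harm_pot \<omega> x", OF a ef eg l nz])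
qed

lemma harm_pot_abs: "harm_pot \<omega> (int (nat \<bar>x\<bar>)) = harm_pot \<omega> x"
  by (simp add: harm_pot_def)

lemma lap_scale: "lap (\<lambda>x. f x / c) x = lap f x / c"
  by (simp add: lap_def diff_divide_distrib)

lemma eig_char:
  assumes gd: "goodp \<omega> a b" and ev: "is_eigenvalue (Op \<omega> a b) \<mu>"
  shows "\<exists>k \<sigma>. validp k \<sigma> \<and> \<mu> = mu \<omega> a b k \<sigma>"
proof -
  have gg: "\<omega> > 0" "a > 0" "b > 0" using gd by (auto simp: goodp_def)
  obtain f where fE: "f \<in> eigenspace (Op \<omega> a b) \<mu>" and fnz: "f \<noteq> (\<lambda>_. 0)"
    using ev by (auto simp: is_eigenvalue_def)
  have l2f: "l2 f" and eqf: "\<And>x. Op \<omega> a b f x = \<mu> * f x" using fE by (auto simp: eigenspace_def fun_eq_iff)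
  obtain x1 where x1: "f x1 \<noteq> 0" using fnz by auto
  obtain x0 where x0: "\<And>x. \<bar>f x\<bar> \<le> \<bar>f x0\<bar>" using l2_max[OF l2f x1] by blast
  have fx0: "f x0 \<noteq> 0" using x0[of x1] x1 by auto
  have win: "\<bar>\<mu> - b * harm_pot \<omega> x0\<bar> \<le> 4 * a" by (rule window) (use gg x0 fx0 eqf in auto)
  define fr where "fr = (\<lambda>x. f (- x))"
  have frE: "fr \<in> eigenspace (Op \<omega> a b) \<mu>"
    using l2_reflect[OF l2f] eqf Op_reflect[of \<omega> a b f]
    by (auto simp: eigenspace_def fr_def fun_eq_iff)
  define c where "c = fr x0 / f x0"
  have frc: "fr = (\<lambda>x. c * f x)" unfolding c_def by (rule simple_Op[OF _ fE frE fx0]) (use gg in auto)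
  have sym: "f (- x) = c * f x" for x using fun_cong[OF frc, of x] by (simp add: fr_def)
  have "f x0 = c * (c * f x0)" using sym[of "- x0"] sym[of x0] by simp
  then have cc: "c * c = 1" using fx0 by (metis mult.assoc mult_cancel_right2 mult.commute)
  then have cpm: "c = 1 \<or> c = -1" by (metis square_eq_1_iff power2_eq_square)
  define k where "k = nat \<bar>x0\<bar>"
  have hk: "harm_pot \<omega> (int k) = harm_pot \<omega> x0" unfolding k_def by (rule harm_pot_abs)
  have kx: "int k = x0 \<or> int k = - x0" unfolding k_def by auto
  have fk: "\<bar>f (int k)\<bar> = \<bar>f x0\<bar>"
    using kx sym[of x0] cpm by (auto simp: abs_mult)
  have fkn: "f (int k) \<noteq> 0" using fk fx0 by auto
  have v: "validp k c"
  proof -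
    have "k \<ge> 1" if "c = -1"
    proof (rule ccontr)
      assume "\<not> k \<ge> 1" then have "k = 0" by simp
      then have "x0 = 0" unfolding k_def by simp
      then show False using sym[of 0] that fx0 by simp
    qed
    then show ?thesis using cpm by (auto simp: validp_def)
  qed
  define g where "g x = f x / f (int k)" for x
  have gb: "\<bar>g x\<bar> \<le> 1" for x using x0[of x] fk fkn by (simp add: g_def abs_divide divide_le_eq_1)
  have gs: "g (- x) = c * g x" for x using sym[of x] by (simp add: g_def)
  have g1: "g (int k) = 1" using fkn by (simp add: g_def)
  have ge: "Op \<omega> a b g x = \<mu> * g x" for x
  proof -
    have "Op \<omega> a b g x = Op \<omega> a b f x / f (int k)"
      unfolding g_def Op_def lap_scale by (simp add: add_divide_distrib)
    then show ?thesis using eqf[of x] by (simp add: g_def)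
  qed
  have win2: "\<bar>\<mu> - b * harm_pot \<omega> (int k)\<bar> \<le> 4 * a" using win hk by simp
  have EF: "nuf \<omega> a b k g = \<mu> \<and> Tm \<omega> a b k c g = g" by (rule eigen_fixed[OF gd v gb gs g1 ge win2])
  have "g = phi \<omega> a b k c" by (rule phi_unique[OF gd v gb gs g1]) (use EF in auto)
  then have "\<mu> = mu \<omega> a b k c" using EF by (simp add: mu_def)
  then show ?thesis using v by blast
qed

lemma mult_one_generic:
  assumes f0: "f0 \<in> eigenspace H \<mu>" and nz: "f0 x0 \<noteq> 0"
    and span: "\<And>g. g \<in> eigenspace H \<mu> \<Longrightarrow> \<exists>c. g = (\<lambda>x. c * f0 x)"
  shows "multiplicity_eig H \<mu> = 1"
proof -
  define A where "A = {card S | S. finite S \<and> S \<subseteq> eigenspace H \<mu> \<and> lin_indep S}"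
  have one: "1 \<in> A"
  proof -
    have "lin_indep {f0}" unfolding lin_indep_def
    proof (intro allI impI ballI)
      fix c :: "(int \<Rightarrow> real) \<Rightarrow> real" and f assume h: "(\<lambda>x. \<Sum>f\<in>{f0}. c f * f x) = (\<lambda>_. 0)" and "f \<in> {f0}"
      then have "(\<lambda>x. c f0 * f0 x) = (\<lambda>_. 0)" by simp
      then have "c f0 * f0 x0 = 0" using fun_cong[of "\<lambda>x. c f0 * f0 x" "\<lambda>_. 0" x0] by simp
      then show "c f = 0" using nz \<open>f \<in> {f0}\<close> by simp
    qed
    then show ?thesis unfolding A_def using f0 by (intro CollectI exI[of _ "{f0}"]) auto
  qed
  have le1: "n \<le> 1" if nA: "n \<in> A" for n
  proof -
    obtain S where S: "n = card S" "finite S" "S \<subseteq> eigenspace H \<mu>" "lin_indep S" using nA by (auto simp: A_def)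
    show ?thesis
    proof (rule ccontr)
      assume "\<not> n \<le> 1"
      then have "2 \<le> card S" using S by simp
      then have "\<not> (\<forall>x\<in>S. \<forall>y\<in>S. x = y)" using card_le_Suc0_iff_eq[OF S(2)] by simp
      then obtain g1 g2 where g: "g1 \<in> S" "g2 \<in> S" "g1 \<noteq> g2" by blast
      obtain c1 where c1: "g1 = (\<lambda>x. c1 * f0 x)" using span g S by blast
      obtain c2 where c2: "g2 = (\<lambda>x. c2 * f0 x)" using span g S by blast
      define c where "c g = (if g = g1 then c2 else if g = g2 then - c1 else 0)" for g
      have "(\<lambda>x. \<Sum>f\<in>S. c f * f x) = (\<lambda>_. 0)"
      proof
        fix x
        have "(\<Sum>f\<in>S. c f * f x) = (\<Sum>f\<in>{g1, g2}. c f * f x)"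
          by (rule sum.mono_neutral_right) (use S g in \<open>auto simp: c_def\<close>)
        also have "\<dots> = c2 * g1 x - c1 * g2 x" using g by (simp add: c_def)
        also have "\<dots> = 0" by (simp add: c1 c2)
        finally show "(\<Sum>f\<in>S. c f * f x) = 0" .
      qed
      then have "c g1 = 0" "c g2 = 0" using S(4) g unfolding lin_indep_def by blast+
      then have "c2 = 0" "c1 = 0" using g by (auto simp: c_def)
      then show False using g c1 c2 by simp
    qed
  qed
  have "Sup A = 1" by (rule cSup_eq_maximum[OF one]) (use le1 in auto)
  then show ?thesis by (simp add: multiplicity_eig_def A_def)
qed

lemma mult_one:
  assumes gd: "goodp \<omega> a b" and ev: "is_eigenvalue (Op \<omega> a b) \<mu>"
  shows "multiplicity_eig (Op \<omega> a b) \<mu> = 1"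
proof -
  have a: "a \<noteq> 0" using gd by (auto simp: goodp_def)
  obtain f where fE: "f \<in> eigenspace (Op \<omega> a b) \<mu>" and fnz: "f \<noteq> (\<lambda>_. 0)"
    using ev by (auto simp: is_eigenvalue_def)
  obtain x1 where x1: "f x1 \<noteq> 0" using fnz by auto
  show ?thesis
    by (rule mult_one_generic[OF fE x1]) (use simple_Op[OF a fE _ x1] in blast)
qed

lemma count_card:
  assumes gd: "goodp \<omega> a b"
  shows "eig_count (Op \<omega> a b) t = card {\<mu>. is_eigenvalue (Op \<omega> a b) \<mu> \<and> \<mu> \<le> t}"
  unfolding eig_count_def using mult_one[OF gd] by simp


lemma hp_mono:
  assumes "k \<le> n"
  shows "harm_pot \<omega> (int k) \<le> harm_pot \<omega> (int n)"
proof -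
  have "(real k)^2 \<le> (real n)^2" using assms by (intro power_mono) auto
  then have "\<omega>\<^sup>2 * (real k)^2 \<le> \<omega>\<^sup>2 * (real n)^2" by (intro mult_left_mono) auto
  then show ?thesis by (simp add: harm_pot_def)
qed

lemma mu_lower:
  assumes gd: "goodp \<omega> a b" and v: "validp k \<sigma>" and kn: "n < k"
  shows "b * harm_pot \<omega> (int n) + 4 * a < mu \<omega> a b k \<sigma>"
proof -
  have gg: "\<omega> > 0" "a > 0" "b > 0" "64 * a \<le> b * \<omega>\<^sup>2" using gd by (auto simp: goodp_def)
  have "b * (harm_pot \<omega> (int n) + \<omega>\<^sup>2 / 2) \<le> b * harm_pot \<omega> (int k)"
    using gap_mono[OF kn gg(1)] gg(3) by (intro mult_left_mono) auto
  then have "b * harm_pot \<omega> (int n) + b * \<omega>\<^sup>2 / 2 \<le> b * harm_pot \<omega> (int k)" by (simp add: algebra_simps)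
  moreover have "\<bar>mu \<omega> a b k \<sigma> - b * harm_pot \<omega> (int k)\<bar> \<le> 4 * a" by (rule mu_window[OF gd v])
  ultimately show ?thesis using gg by linarith
qed

lemma mu_upper:
  assumes gd: "goodp \<omega> a b" and v: "validp k \<sigma>" and kn: "k \<le> n"
  shows "mu \<omega> a b k \<sigma> \<le> b * harm_pot \<omega> (int n) + 4 * a"
proof -
  have gg: "b > 0" using gd by (auto simp: goodp_def)
  have "b * harm_pot \<omega> (int k) \<le> b * harm_pot \<omega> (int n)" using hp_mono[OF kn] gg by (intro mult_left_mono) auto
  moreover have "\<bar>mu \<omega> a b k \<sigma> - b * harm_pot \<omega> (int k)\<bar> \<le> 4 * a" by (rule mu_window[OF gd v])
  ultimately show ?thesis by linarith
qed

lemma mu_ge: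
  assumes gd: "goodp \<omega> a b" and v: "validp k \<sigma>" and kn: "n \<le> k"
  shows "b * harm_pot \<omega> (int n) - 4 * a \<le> mu \<omega> a b k \<sigma>"
proof -
  have gg: "b > 0" using gd by (auto simp: goodp_def)
  have "b * harm_pot \<omega> (int n) \<le> b * harm_pot \<omega> (int k)" using hp_mono[OF kn] gg by (intro mult_left_mono) auto
  moreover have "\<bar>mu \<omega> a b k \<sigma> - b * harm_pot \<omega> (int k)\<bar> \<le> 4 * a" by (rule mu_window[OF gd v])
  ultimately show ?thesis by linarith
qed

lemma mu_inj:
  assumes gd: "goodp \<omega> a b" and v: "validp k \<sigma>" and v': "validp k' \<sigma>'"
    and eq: "mu \<omega> a b k \<sigma> = mu \<omega> a b k' \<sigma>'"
  shows "k = k' \<and> \<sigma> = \<sigma>'"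
proof -
  have kk: "k = k'"
  proof (rule ccontr)
    assume "k \<noteq> k'"
    then consider "k < k'" | "k' < k" by linarith
    then show False
    proof cases
      case 1
      have "mu \<omega> a b k \<sigma> \<le> b * harm_pot \<omega> (int k) + 4 * a" by (rule mu_upper[OF gd v]) simp
      moreover have "b * harm_pot \<omega> (int k) + 4 * a < mu \<omega> a b k' \<sigma>'" by (rule mu_lower[OF gd v' 1])
      ultimately show False using eq by simp
    next
      case 2
      have "mu \<omega> a b k' \<sigma>' \<le> b * harm_pot \<omega> (int k') + 4 * a" by (rule mu_upper[OF gd v']) simp
      moreover have "b * harm_pot \<omega> (int k') + 4 * a < mu \<omega> a b k \<sigma>" by (rule mu_lower[OF gd v 2])
      ultimately show False using eq by simp
    qed
  qed
  have "\<sigma> = \<sigma>'"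
  proof (rule ccontr)
    assume ne: "\<sigma> \<noteq> \<sigma>'"
    have a: "a \<noteq> 0" using gd by (auto simp: goodp_def)
    note E1 = phi_eig[OF gd v] and E2 = phi_eig[OF gd v']
    have E2': "phi \<omega> a b k \<sigma>' \<in> eigenspace (Op \<omega> a b) (mu \<omega> a b k \<sigma>)" using E2(1) eq kk by simp
    have nz: "phi \<omega> a b k \<sigma> (int k) \<noteq> 0" using E1(2) by simp
    have "phi \<omega> a b k \<sigma>' = (\<lambda>x. (phi \<omega> a b k \<sigma>' (int k) / phi \<omega> a b k \<sigma> (int k)) * phi \<omega> a b k \<sigma> x)"
      by (rule simple_Op[OF a E1(1) E2' nz])
    also have "\<dots> = phi \<omega> a b k \<sigma>" using E1(2) E2(2) kk by simp
    finally have same: "phi \<omega> a b k \<sigma>' = phi \<omega> a b k \<sigma>" .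
    have "phi \<omega> a b k \<sigma> (- int k) = \<sigma>" using phi_props[OF gd v] by auto
    moreover have "phi \<omega> a b k \<sigma>' (- int k) = \<sigma>'" using phi_props[OF gd v'] kk by auto
    ultimately show False using same ne by simp
  qed
  then show ?thesis using kk by simp
qed

definition muP :: "real \<Rightarrow> real \<Rightarrow> real \<Rightarrow> nat \<times> real \<Rightarrow> real" where
  "muP \<omega> a b p = mu \<omega> a b (fst p) (snd p)"

definition VP :: "(nat \<times> real) set" where "VP = {p. validp (fst p) (snd p)}"

lemma count_VP:
  assumes gd: "goodp \<omega> a b"
  shows "eig_count (Op \<omega> a b) t = card {p \<in> VP. muP \<omega> a b p \<le> t}"
proof -
  have "{\<mu>. is_eigenvalue (Op \<omega> a b) \<mu> \<and> \<mu> \<le> t} = muP \<omega> a b ` {p \<in> VP. muP \<omega> a b p \<le> t}"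
  proof (intro set_eqI iffI)
    fix \<mu> assume "\<mu> \<in> {\<mu>. is_eigenvalue (Op \<omega> a b) \<mu> \<and> \<mu> \<le> t}"
    then have h: "is_eigenvalue (Op \<omega> a b) \<mu>" "\<mu> \<le> t" by auto
    obtain k \<sigma> where "validp k \<sigma>" "\<mu> = mu \<omega> a b k \<sigma>" using eig_char[OF gd h(1)] by blast
    then show "\<mu> \<in> muP \<omega> a b ` {p \<in> VP. muP \<omega> a b p \<le> t}"
      using h(2) by (intro image_eqI[of _ _ "(k, \<sigma>)"]) (auto simp: muP_def VP_def)
  next
    fix \<mu> assume "\<mu> \<in> muP \<omega> a b ` {p \<in> VP. muP \<omega> a b p \<le> t}"
    then obtain p where "p \<in> VP" "muP \<omega> a b p \<le> t" "\<mu> = muP \<omega> a b p" by auto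
    then show "\<mu> \<in> {\<mu>. is_eigenvalue (Op \<omega> a b) \<mu> \<and> \<mu> \<le> t}"
      using phi_is_eig[OF gd, of "fst p" "snd p"] by (auto simp: muP_def VP_def)
  qed
  moreover have "inj_on (muP \<omega> a b) {p \<in> VP. muP \<omega> a b p \<le> t}"
  proof (rule inj_onI)
    fix p q assume "p \<in> {p \<in> VP. muP \<omega> a b p \<le> t}" "q \<in> {p \<in> VP. muP \<omega> a b p \<le> t}" "muP \<omega> a b p = muP \<omega> a b q"
    then have "fst p = fst q \<and> snd p = snd q" using mu_inj[OF gd] by (auto simp: VP_def muP_def)
    then show "p = q" by (simp add: prod_eq_iff)
  qed
  ultimately show ?thesis using count_card[OF gd] by (simp add: card_image)
qed

lemma Qlt_eq: "{p \<in> VP. fst p < n} = ({..<n} \<times> {1}) \<union> ({1..<n} \<times> {-1})"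
  by (auto simp: VP_def validp_def)

lemma Qle_eq: "{p \<in> VP. fst p \<le> n} = ({..n} \<times> {1}) \<union> ({1..n} \<times> {-1})"
  by (auto simp: VP_def validp_def)

lemma card_Qlt: "card {p \<in> VP. fst p < n} = 2 * n - 1"
proof -
  have "card (({..<n} \<times> {1::real}) \<union> ({1..<n} \<times> {-1})) = card ({..<n} \<times> {1::real}) + card ({1..<n} \<times> {-1::real})"
    by (rule card_Un_disjoint) auto
  also have "\<dots> = n + (n - 1)" by (simp add: card_cartesian_product)
  finally show ?thesis unfolding Qlt_eq by simp
qed

lemma card_Qle: "card {p \<in> VP. fst p \<le> n} = 2 * n + 1"
proof -
  have "card (({..n} \<times> {1::real}) \<union> ({1..n} \<times> {-1})) = card ({..n} \<times> {1::real}) + card ({1..n} \<times> {-1::real})"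
    by (rule card_Un_disjoint) auto
  also have "\<dots> = (n + 1) + n" by (simp add: card_cartesian_product)
  finally show ?thesis unfolding Qle_eq by simp
qed

lemma finite_Qlt: "finite {p \<in> VP. fst p < n}" unfolding Qlt_eq by simp

lemma E_bounds_gen:
  assumes low: "\<And>t. t < L \<Longrightarrow> eig_count H t \<le> j" and up: "j < eig_count H U"
  shows "L \<le> E H j \<and> E H j \<le> U"
proof -
  define S where "S = {t. j < eig_count H t}"
  have US: "U \<in> S" using up by (simp add: S_def)
  have lb: "L \<le> t" if "t \<in> S" for t
  proof (rule ccontr)
    assume "\<not> L \<le> t"
    then have "eig_count H t \<le> j" using low by simp
    then show False using that by (simp add: S_def)
  qed
  have bdd: "bdd_below S" using lb by (auto simp: bdd_below_def)
  have "Inf S \<le> U" by (rule cInf_lower[OF US bdd])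
  moreover have "L \<le> Inf S" by (rule cInf_greatest) (use US lb in auto)
  ultimately show ?thesis by (simp add: E_def S_def)
qed

lemma main_bounds:
  assumes gd: "goodp \<omega> a b" and j: "2 * n - 1 \<le> j" "j \<le> 2 * n"
  shows "b * harm_pot \<omega> (int n) - 4 * a \<le> E (Op \<omega> a b) j \<and> E (Op \<omega> a b) j \<le> b * harm_pot \<omega> (int n) + 4 * a"
proof (rule E_bounds_gen)
  fix t assume t: "t < b * harm_pot \<omega> (int n) - 4 * a"
  have sub: "{p \<in> VP. muP \<omega> a b p \<le> t} \<subseteq> {p \<in> VP. fst p < n}"
  proof
    fix p assume p: "p \<in> {p \<in> VP. muP \<omega> a b p \<le> t}"
    show "p \<in> {p \<in> VP. fst p < n}"
    proof (rule ccontr)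
      assume "p \<notin> {p \<in> VP. fst p < n}"
      then have "n \<le> fst p" using p by auto
      then have "b * harm_pot \<omega> (int n) - 4 * a \<le> muP \<omega> a b p"
        using mu_ge[OF gd _ \<open>n \<le> fst p\<close>, of "snd p"] p by (auto simp: VP_def muP_def)
      then show False using p t by auto
    qed
  qed
  have "eig_count (Op \<omega> a b) t = card {p \<in> VP. muP \<omega> a b p \<le> t}" by (rule count_VP[OF gd])
  also have "\<dots> \<le> card {p \<in> VP. fst p < n}" by (rule card_mono[OF finite_Qlt sub])
  also have "\<dots> \<le> j" using card_Qlt j by simp
  finally show "eig_count (Op \<omega> a b) t \<le> j" .
next
  have eq: "{p \<in> VP. muP \<omega> a b p \<le> b * harm_pot \<omega> (int n) + 4 * a} = {p \<in> VP. fst p \<le> n}"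
  proof (intro set_eqI iffI)
    fix p assume p: "p \<in> {p \<in> VP. muP \<omega> a b p \<le> b * harm_pot \<omega> (int n) + 4 * a}"
    show "p \<in> {p \<in> VP. fst p \<le> n}"
    proof (rule ccontr)
      assume "p \<notin> {p \<in> VP. fst p \<le> n}"
      then have "n < fst p" using p by auto
      then show False using mu_lower[OF gd _ \<open>n < fst p\<close>, of "snd p"] p by (auto simp: VP_def muP_def)
    qed
  next
    fix p assume p: "p \<in> {p \<in> VP. fst p \<le> n}"
    then show "p \<in> {p \<in> VP. muP \<omega> a b p \<le> b * harm_pot \<omega> (int n) + 4 * a}"
      using mu_upper[OF gd, of "fst p" "snd p" n] by (auto simp: VP_def muP_def)
  qed
  show "j < eig_count (Op \<omega> a b) (b * harm_pot \<omega> (int n) + 4 * a)"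
    unfolding count_VP[OF gd] eq card_Qle using j by simp
qed


lemma key_lim:
  fixes \<omega> \<gamma> :: real
  assumes w: "\<omega> > 0" and g: "\<gamma> < -1" and j: "2 * n - 1 \<le> j" "j \<le> 2 * n"
  shows "(\<lambda>N. E (H_op (harm_pot \<omega>) \<gamma> N) j / real N powr (2 * \<bar>\<gamma>\<bar>)) \<longlonglongrightarrow> harm_pot \<omega> (int n)"
proof -
  define r where "r N = real N powr (2 + 2 * \<gamma>) / 2" for N :: nat
  have "(\<lambda>N. real N powr (2 + 2 * \<gamma>)) \<longlonglongrightarrow> 0"
    by (rule tendsto_neg_powr[OF _ filterlim_real_sequentially]) (use g in simp)
  then have r0: "r \<longlonglongrightarrow> 0" unfolding r_def by (rule tendsto_divide_zero)
  have wpos: "\<omega>\<^sup>2 / 64 > 0" using w by simp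
  have ev: "eventually (\<lambda>N. 1 \<le> N \<and> r N < \<omega>\<^sup>2 / 64) sequentially"
    using order_tendstoD(2)[OF r0 wpos] eventually_ge_at_top[of 1] by eventually_elim auto
  define l where "l = harm_pot \<omega> (int n)"
  have bound: "eventually (\<lambda>N. norm (E (H_op (harm_pot \<omega>) \<gamma> N) j / real N powr (2 * \<bar>\<gamma>\<bar>) - l) \<le> 4 * r N) sequentially"
    using ev
  proof eventually_elim
    case (elim N)
    define a where "a = (real N)\<^sup>2 / 2"
    define b where "b = real N powr (-2 * \<gamma>)"
    have Np: "real N > 0" using elim by simp
    have ap: "a > 0" using Np by (simp add: a_def)
    have bp: "b > 0" using Np by (simp add: b_def)
    have rab: "r N = a / b"
    proof -
      have "real N powr (2 + 2 * \<gamma>) = real N powr (2 - (-2 * \<gamma>))" by simp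
      also have "\<dots> = real N powr 2 / real N powr (-2 * \<gamma>)" by (rule powr_diff)
      also have "\<dots> = (real N)\<^sup>2 / b" using Np by (simp add: b_def)
      finally show ?thesis by (simp add: r_def a_def)
    qed
    have "r N < \<omega>\<^sup>2 / 64" using elim by simp
    then have "64 * (a / b) \<le> \<omega>\<^sup>2" unfolding rab by linarith
    then have "64 * a \<le> b * \<omega>\<^sup>2" using bp by (simp add: field_simps)
    then have gd: "goodp \<omega> a b" using w ap bp by (simp add: goodp_def)
    have HE: "H_op (harm_pot \<omega>) \<gamma> N = Op \<omega> a b" by (simp add: H_eq a_def b_def)
    have den: "real N powr (2 * \<bar>\<gamma>\<bar>) = b" using g by (simp add: b_def)
    have MB: "b * l - 4 * a \<le> E (Op \<omega> a b) j \<and> E (Op \<omega> a b) j \<le> b * l + 4 * a"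
      using main_bounds[OF gd j] by (simp add: l_def)
    have "\<bar>E (Op \<omega> a b) j - b * l\<bar> \<le> 4 * a" using MB by linarith
    then have "\<bar>E (Op \<omega> a b) j - b * l\<bar> / b \<le> 4 * a / b" using bp by (simp add: divide_right_mono)
    moreover have "\<bar>E (Op \<omega> a b) j - b * l\<bar> / b = \<bar>E (Op \<omega> a b) j / b - l\<bar>"
    proof -
      have e: "E (Op \<omega> a b) j / b - l = (E (Op \<omega> a b) j - b * l) / b" using bp by (simp add: field_simps)
      show ?thesis unfolding e using bp by (simp add: abs_divide)
    qed
    ultimately show ?case using rab by (simp add: HE den)
  qed
  have "(\<lambda>N. 4 * r N) \<longlonglongrightarrow> 0" using tendsto_mult_right_zero[OF r0, of 4] by simp
  then have "(\<lambda>N. E (H_op (harm_pot \<omega>) \<gamma> N) j / real N powr (2 * \<bar>\<gamma>\<bar>) - l) \<longlonglongrightarrow> 0"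
    by (rule Lim_null_comparison[OF bound])
  then show ?thesis unfolding l_def by (rule LIM_zero_cancel)
qed

theorem proposition4p2:
  fixes \<omega> \<gamma> :: real
  assumes "\<omega> > 0" and "\<gamma> < -1"
  shows "(\<lambda>N. E (H_op (harm_pot \<omega>) \<gamma> N) 0 / real N powr (2 * \<bar>\<gamma>\<bar>)) \<longlonglongrightarrow> 0 \<and>
         (\<forall>n::nat. n \<ge> 1 \<longrightarrow>
           (\<lambda>N. E (H_op (harm_pot \<omega>) \<gamma> N) (2 * n) / real N powr (2 * \<bar>\<gamma>\<bar>))
              \<longlonglongrightarrow> \<omega>\<^sup>2 * (real n)\<^sup>2 / 2 \<and>
           (\<lambda>N. E (H_op (harm_pot \<omega>) \<gamma> N) (2 * n - 1) / real N powr (2 * \<bar>\<gamma>\<bar>))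
              \<longlonglongrightarrow> \<omega>\<^sup>2 * (real n)\<^sup>2 / 2)"
proof (intro conjI allI impI)
  show "(\<lambda>N. E (H_op (harm_pot \<omega>) \<gamma> N) 0 / real N powr (2 * \<bar>\<gamma>\<bar>)) \<longlonglongrightarrow> 0"
    using key_lim[OF assms, of 0 0] by (simp add: harm_pot_def)
next
  fix n :: nat assume "n \<ge> 1"
  have hp: "harm_pot \<omega> (int n) = \<omega>\<^sup>2 * (real n)\<^sup>2 / 2" by (simp add: harm_pot_def)
  show "(\<lambda>N. E (H_op (harm_pot \<omega>) \<gamma> N) (2 * n) / real N powr (2 * \<bar>\<gamma>\<bar>)) \<longlonglongrightarrow> \<omega>\<^sup>2 * (real n)\<^sup>2 / 2"
    using key_lim[OF assms, of n "2 * n"] hp by simp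
  show "(\<lambda>N. E (H_op (harm_pot \<omega>) \<gamma> N) (2 * n - 1) / real N powr (2 * \<bar>\<gamma>\<bar>)) \<longlonglongrightarrow> \<omega>\<^sup>2 * (real n)\<^sup>2 / 2"
    using key_lim[OF assms, of n "2 * n - 1"] hp by simp
qed

end
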